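(* The graph property $3\text{-}\mathsf{COLORABLE}$ does not belong to $\mathrm{LP}$.
   Context: Graphs. All graphs are finite, nonempty, simple, undirected and connected, and labeled: a graph is a triple $G=(V(G),E(G),\lambda_G)$ with labeling $\lambda_G:V(G)\to\{0,1\}^*$. A graph property is a set of graphs closed under label-preserving isomorphism. $3\text{-}\mathsf{COLORABLE}$ is the set of graphs $G$ admitting $f:V(G)\to\{0,1,2\}$ with $f(u)\ne f(v)$ for every edge $\{u,v\}$ (labels irrelevant). Identifiers. An identifier assignment of $G$ is a map $\mathrm{id}:V(G)\to\{0,1\}^*$; it is $r$-locally unique if $\mathrm{id}(u)\neq\mathrm{id}(v)$ for all distinct nodes $u,v$ at distance at most $2r$. Identifiers are ordered lexicographically (a proper prefix is smaller). Distributed Turing machines. Such a machine $M$ is a Turing machine with three one-way-infinite tapes (receiving, internal, sending) over the alphabet $\{\vdash,\square,\#,0,1\}$ (left-end marker, blank, separator, bits), with designated states start, pause, stop. It is executed on a graph $G$ under an (at least $1$-locally unique) identifier assignment $\mathrm{id}$: every node runs its own copy of $M$ in synchronous rounds. In each round, a node $u$ whose neighbors are $v_1,\dots,v_d$ in increasing identifier order (i) gets $m_1\#\cdots\#m_d\#$ on its receiving tape, where $m_i$ is the message sent to it by $v_i$ in the previous round (empty in the first round); (ii) its sending tape is emptied, its internal tape is initialized to $\lambda_G(u)\#\mathrm{id}(u)\#$ in the first round and otherwise keeps its content, and, unless $u$ reached stop in an earlier round, $M$ runs from state start with all heads leftmost until it enters pause or stop; (iii) $u$ sends to $v_i$ the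 $i$-th $\#$-separated bit string on its sending tape (the empty string if there is none). The execution terminates once all nodes are in stop; $G$ is accepted if at that point every node has exactly the bit string $1$ on its internal tape (symbols other than $0,1$ ignored). A local-polynomial machine is a distributed Turing machine for which there are a constant $c$ and a polynomial $q$ such that, on every graph and under all identifier assignments, all nodes reach stop within $c$ rounds, and in every round every node makes at most $q(n)$ computation steps, $n$ being the total length of its receiving- and internal-tape contents at the beginning of the round. $\mathrm{LP}$ is the class of graph properties $P$ for which there are a local-polynomial machine $M$ and a constant $r_{\mathrm{id}}\ge1$ such that for every graph $G$ and every $r_{\mathrm{id}}$-locally unique identifier assignment $\mathrm{id}$, $M$ accepts $G$ under $\mathrm{id}$ iff $G\in P$. *)

theory Defs
  imports Main "HOL-Computational_Algebra.Polynomial"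
begin

text \<open>Vertices are natural numbers (every finite graph is isomorphic to one of this form).
  Labels and identifiers are bit strings, represented as bool lists (False = 0, True = 1).\<close>

record graph =
  gverts :: "nat set"
  gadj   :: "nat \<Rightarrow> nat \<Rightarrow> bool"
  glab   :: "nat \<Rightarrow> bool list"

definition wf_graph :: "graph \<Rightarrow> bool" where
  "wf_graph G \<longleftrightarrow>
     finite (gverts G) \<and> gverts G \<noteq> {} \<and>
     (\<forall>u v. gadj G u v \<longrightarrow> u \<in> gverts G \<and> v \<in> gverts G) \<and>
     (\<forall>u v. gadj G u v \<longrightarrow> gadj G v u) \<and>
     (\<forall>u. \<not> gadj G u u) \<and>
     (\<forall>u\<in>gverts G. \<forall>v\<in>gverts G. (gadj G)\<^sup>*\<^sup>* u v)"

definition graph_iso :: "graph \<Rightarrow> graph \<Rightarrow> (nat \<Rightarrow> nat) \<Rightarrow> bool" where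
  "graph_iso G H f \<longleftrightarrow>
     bij_betw f (gverts G) (gverts H) \<and>
     (\<forall>u\<in>gverts G. \<forall>v\<in>gverts G. gadj G u v \<longleftrightarrow> gadj H (f u) (f v)) \<and>
     (\<forall>u\<in>gverts G. glab H (f u) = glab G u)"

definition graph_property :: "graph set \<Rightarrow> bool" where
  "graph_property P \<longleftrightarrow>
     (\<forall>G\<in>P. wf_graph G) \<and>
     (\<forall>G H f. G \<in> P \<and> wf_graph H \<and> graph_iso G H f \<longrightarrow> H \<in> P)"

definition three_colorable :: "graph set" where
  "three_colorable = {G. wf_graph G \<and>
     (\<exists>f :: nat \<Rightarrow> nat. (\<forall>u\<in>gverts G. f u < 3) \<and>
        (\<forall>u v. gadj G u v \<longrightarrow> f u \<noteq> f v))}"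

text \<open>Lexicographic order on bit strings; a proper prefix is smaller.\<close>
definition id_less :: "bool list \<Rightarrow> bool list \<Rightarrow> bool" where
  "id_less a b \<longleftrightarrow> (a, b) \<in> lexord {(x, y). x = False \<and> y = True}"

definition locally_unique :: "nat \<Rightarrow> graph \<Rightarrow> (nat \<Rightarrow> bool list) \<Rightarrow> bool" where
  "locally_unique r G idf \<longleftrightarrow>
     (\<forall>u\<in>gverts G. \<forall>v\<in>gverts G. u \<noteq> v \<and> (\<exists>k\<le>2*r. (gadj G ^^ k) u v)
        \<longrightarrow> idf u \<noteq> idf v)"

definition nbrs :: "graph \<Rightarrow> (nat \<Rightarrow> bool list) \<Rightarrow> nat \<Rightarrow> nat list" where
  "nbrs G idf u = (SOME xs. distinct xs \<and> set xs = {v \<in> gverts G. gadj G u v} \<and>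
                      sorted_wrt (\<lambda>a b. id_less (idf a) (idf b)) xs)"

text \<open>Symbols: left-end marker, blank, separator #, bits 0 and 1.\<close>
datatype sym = LEnd | Blank | Sep | Zero | One

datatype move = MvL | MvR | MvS

record dtm =
  tm_states :: "nat set"
  tm_start  :: nat
  tm_pause  :: nat
  tm_stop   :: nat
  tm_delta  :: "nat \<Rightarrow> sym \<Rightarrow> sym \<Rightarrow> sym \<Rightarrow> nat \<times> (sym \<times> move) \<times> (sym \<times> move) \<times> (sym \<times> move)"

definition wf_dtm :: "dtm \<Rightarrow> bool" where
  "wf_dtm M \<longleftrightarrow> finite (tm_states M) \<and>
     tm_start M \<in> tm_states M \<and> tm_pause M \<in> tm_states M \<and> tm_stop M \<in> tm_states M \<and>
     tm_start M \<noteq> tm_pause M \<and> tm_start M \<noteq> tm_stop M \<and> tm_pause M \<noteq> tm_stop M \<and>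
     (\<forall>q\<in>tm_states M. \<forall>a b c. fst (tm_delta M q a b c) \<in> tm_states M)"

text \<open>A one-way infinite tape: the list holds cells 1, 2, ...; cell 0 holds the left-end
  marker; all cells beyond the list are blank. The nat is the head position.\<close>
type_synonym tape = "sym list \<times> nat"

definition tape_read :: "tape \<Rightarrow> sym" where
  "tape_read t = (let (xs, h) = t in
     if h = 0 then LEnd else if h \<le> length xs then xs ! (h - 1) else Blank)"

definition tape_act :: "tape \<Rightarrow> sym \<times> move \<Rightarrow> tape" where
  "tape_act t a = (let (xs, h) = t; (s, m) = a;
     xs' = (if h = 0 then xs else (xs @ replicate (h - length xs) Blank)[h - 1 := s]);
     h' = (case m of MvL \<Rightarrow> h - 1 | MvR \<Rightarrow> h + 1 | MvS \<Rightarrow> h)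
   in (xs', h'))"

type_synonym config = "nat \<times> tape \<times> tape \<times> tape"

definition halted :: "dtm \<Rightarrow> config \<Rightarrow> bool" where
  "halted M c \<longleftrightarrow> fst c = tm_pause M \<or> fst c = tm_stop M"

definition tm_step :: "dtm \<Rightarrow> config \<Rightarrow> config" where
  "tm_step M c = (if halted M c then c else
     (let (q, t1, t2, t3) = c;
          (q', a1, a2, a3) = tm_delta M q (tape_read t1) (tape_read t2) (tape_read t3)
      in (q', tape_act t1 a1, tape_act t2 a2, tape_act t3 a3)))"

text \<open>One round of computation of a single node: receiving tape R, internal tape I,
  empty sending tape, all heads leftmost, starting in the start state.\<close>
definition run_round :: "dtm \<Rightarrow> sym list \<Rightarrow> sym list \<Rightarrow> (nat \<times> config) option" where
  "run_round M R I = (let c0 = (tm_start M, (R, 0), (I, 0), ([], 0)) in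
     if \<exists>k. halted M ((tm_step M ^^ k) c0)
     then (let k = (LEAST k. halted M ((tm_step M ^^ k) c0)) in Some (k, (tm_step M ^^ k) c0))
     else None)"

text \<open>Tape contents: trailing blanks are not part of the content.\<close>
definition strip :: "sym list \<Rightarrow> sym list" where
  "strip xs = rev (dropWhile (\<lambda>s. s = Blank) (rev xs))"

definition enc :: "bool list \<Rightarrow> sym list" where
  "enc bs = map (\<lambda>b. if b then One else Zero) bs"

definition bits_of :: "sym list \<Rightarrow> bool list" where
  "bits_of xs = map (\<lambda>s. s = One) (filter (\<lambda>s. s = Zero \<or> s = One) xs)"

fun split_sep :: "sym list \<Rightarrow> sym list list" where
  "split_sep [] = [[]]"
| "split_sep (s # xs) = (if s = Sep then [] # split_sep xs
                         else (let ys = split_sep xs in (s # hd ys) # tl ys))"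

text \<open>The j-th (0-based) #-separated bit string on a sending tape (empty if there is none);
  symbols other than 0, 1, # are ignored.\<close>
definition out_msg :: "sym list \<Rightarrow> nat \<Rightarrow> bool list" where
  "out_msg xs j = (let ps = split_sep (filter (\<lambda>s. s = Zero \<or> s = One \<or> s = Sep) xs) in
     if j < length ps then bits_of (ps ! j) else [])"

record nstate =
  ns_int  :: "sym list"
  ns_stop :: bool
  ns_send :: "sym list"

text \<open>Message sent by v to its neighbour u in the previous round.\<close>
definition msg_from :: "graph \<Rightarrow> (nat \<Rightarrow> bool list) \<Rightarrow> (nat \<Rightarrow> nstate) \<Rightarrow> nat \<Rightarrow> nat \<Rightarrow> bool list" where
  "msg_from G idf S v u = (let ns = nbrs G idf v in
     case [j. j \<leftarrow> [0..<length ns], ns ! j = u] of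
       [] \<Rightarrow> []
     | j # _ \<Rightarrow> out_msg (ns_send (S v)) j)"

definition recv_tape :: "graph \<Rightarrow> (nat \<Rightarrow> bool list) \<Rightarrow> (nat \<Rightarrow> nstate) \<Rightarrow> nat \<Rightarrow> sym list" where
  "recv_tape G idf S u = concat (map (\<lambda>v. enc (msg_from G idf S v u) @ [Sep]) (nbrs G idf u))"

definition init_state :: "graph \<Rightarrow> (nat \<Rightarrow> bool list) \<Rightarrow> nat \<Rightarrow> nstate" where
  "init_state G idf u = \<lparr>ns_int = enc (glab G u) @ [Sep] @ enc (idf u) @ [Sep],
                          ns_stop = False, ns_send = []\<rparr>"

definition node_round :: "dtm \<Rightarrow> graph \<Rightarrow> (nat \<Rightarrow> bool list) \<Rightarrow> (nat \<Rightarrow> nstate) \<Rightarrow> nat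
    \<Rightarrow> (nat \<times> nstate) option" where
  "node_round M G idf S u =
     (if ns_stop (S u) then Some (0, (S u)\<lparr>ns_send := []\<rparr>)
      else (case run_round M (recv_tape G idf S u) (strip (ns_int (S u))) of
              None \<Rightarrow> None
            | Some (k, (q, t1, t2, t3)) \<Rightarrow>
                Some (k, \<lparr>ns_int = strip (fst t2), ns_stop = (q = tm_stop M),
                          ns_send = fst t3\<rparr>)))"

fun exec :: "dtm \<Rightarrow> graph \<Rightarrow> (nat \<Rightarrow> bool list) \<Rightarrow> nat \<Rightarrow> (nat \<Rightarrow> nstate) option" where
  "exec M G idf 0 = Some (init_state G idf)"
| "exec M G idf (Suc r) = (case exec M G idf r of
      None \<Rightarrow> None
    | Some S \<Rightarrow> (if \<forall>u\<in>gverts G. node_round M G idf S u \<noteq> None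
                 then Some (\<lambda>u. snd (the (node_round M G idf S u))) else None))"

definition accepts :: "dtm \<Rightarrow> graph \<Rightarrow> (nat \<Rightarrow> bool list) \<Rightarrow> bool" where
  "accepts M G idf \<longleftrightarrow> (\<exists>r S. exec M G idf r = Some S \<and>
      (\<forall>u\<in>gverts G. ns_stop (S u)) \<and>
      (\<forall>u\<in>gverts G. bits_of (ns_int (S u)) = [True]))"

definition local_polynomial :: "dtm \<Rightarrow> bool" where
  "local_polynomial M \<longleftrightarrow> (\<exists>(c::nat) (q::nat poly). \<forall>G idf.
     wf_graph G \<and> locally_unique 1 G idf \<longrightarrow>
       (\<exists>S. exec M G idf c = Some S \<and> (\<forall>u\<in>gverts G. ns_stop (S u))) \<and>
       (\<forall>r S u. exec M G idf r = Some S \<and> u \<in> gverts G \<and> \<not> ns_stop (S u) \<longrightarrow>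
          (\<exists>k ns. node_round M G idf S u = Some (k, ns) \<and>
             k \<le> poly q (length (recv_tape G idf S u) + length (strip (ns_int (S u)))))))"

definition LP :: "graph set set" where
  "LP = {P. graph_property P \<and>
     (\<exists>M r_id. wf_dtm M \<and> local_polynomial M \<and> r_id \<ge> 1 \<and>
        (\<forall>G idf. wf_graph G \<and> locally_unique r_id G idf \<longrightarrow>
           (accepts M G idf \<longleftrightarrow> G \<in> P)))}"

end

theory Submission
  imports Defs "HOL-Library.List_Lexorder" "HOL-Number_Theory.Cong"
begin

lemma id_less_iff: "id_less a b \<longleftrightarrow> a < b"
proof -
  have "{(x, y). x = False \<and> y = True} = {(u, v). (u::bool) < v}" by auto
  then show ?thesis by (simp only: id_less_def list_less_def)
qed

lemma sorted_unique:
  assumes "sorted_wrt R xs" "sorted_wrt R ys" "distinct xs" "distinct ys" "set xs = set ys"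
    "\<And>a b. R a b \<Longrightarrow> \<not> R b a"
  shows "xs = ys"
  using assms(1-5)
proof (induction xs arbitrary: ys)
  case Nil then show ?case by simp
next
  case (Cons x xs)
  then obtain y ys' where ys: "ys = y # ys'" by (cases ys) auto
  have "x = y"
  proof (rule ccontr)
    assume ne: "x \<noteq> y"
    have "y \<in> set xs" using Cons.prems ys ne by auto
    then have "R x y" using Cons.prems(1) by auto
    moreover have "x \<in> set ys'" using Cons.prems ys ne by (metis list.set_intros(1) set_ConsD)
    then have "R y x" using Cons.prems(2) ys by auto
    ultimately show False using assms(6) by blast
  qed
  moreover have "set xs = set ys'" using Cons.prems ys \<open>x = y\<close>
    by (metis distinct.simps(2) insert_eq_iff list.simps(15))
  ultimately show ?case using Cons ys by auto
qed

lemma nbrs_eq: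
  assumes "distinct xs" "set xs = {v \<in> gverts G. gadj G u v}"
    "sorted_wrt (\<lambda>a b. id_less (idf a) (idf b)) xs"
  shows "nbrs G idf u = xs"
proof -
  let ?P = "\<lambda>xs. distinct xs \<and> set xs = {v \<in> gverts G. gadj G u v} \<and>
                      sorted_wrt (\<lambda>a b. id_less (idf a) (idf b)) xs"
  have "?P (nbrs G idf u)" unfolding nbrs_def by (rule someI[of ?P xs]) (use assms in auto)
  then show ?thesis using assms
    by (intro sorted_unique[where R="\<lambda>a b. id_less (idf a) (idf b)"]) (auto simp: id_less_iff)
qed

lemma nbrs_exists:
  assumes "finite (A::nat set)" "inj_on idf A"
  shows "\<exists>xs. distinct xs \<and> set xs = A \<and> sorted_wrt (\<lambda>a b. id_less (idf a) (idf b)) xs"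
proof -
  define xs where "xs = sort_key idf (sorted_list_of_set A)"
  have d: "distinct xs" "set xs = A" using assms by (auto simp: xs_def)
  have "sorted (map idf xs)" by (simp add: xs_def)
  moreover have "distinct (map idf xs)" using d assms by (simp add: distinct_map)
  ultimately have "sorted_wrt (<) (map idf xs)" by (simp add: strict_sorted_iff)
  then show ?thesis using d by (auto simp: sorted_wrt_map id_less_iff)
qed


definition sqc :: "nat \<Rightarrow> graph" where
  "sqc N = \<lparr>gverts = {..<N},
     gadj = (\<lambda>u v. u < N \<and> v < N \<and> (\<exists>d\<in>{-2,-1,1,2::int}. [int v = int u + d] (mod int N))),
     glab = (\<lambda>_. [])\<rparr>"

lemma sqc_simps[simp]: "gverts (sqc N) = {..<N}" "glab (sqc N) u = []"
  by (auto simp: sqc_def)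

lemma sqc_adj: "gadj (sqc N) u v \<longleftrightarrow> u < N \<and> v < N \<and> (\<exists>d\<in>{-2,-1,1,2::int}. [int v = int u + d] (mod int N))"
  by (auto simp: sqc_def)

lemma small_mult_zero:
  fixes m :: int assumes "\<bar>N * m\<bar> < N" shows "m = 0"
proof (rule ccontr)
  assume "m \<noteq> 0"
  then have "\<bar>m\<bar> \<ge> 1" by simp
  have "N > 0" using assms using abs_ge_zero[of "N*m"] by linarith
  then have "\<bar>N * m\<bar> = N * \<bar>m\<bar>" by (simp add: abs_mult)
  also have "\<dots> \<ge> N" using \<open>\<bar>m\<bar> \<ge> 1\<close> \<open>N > 0\<close> by simp
  finally show False using assms by simp
qed

lemma adj_lt: "gadj (sqc N) u v \<Longrightarrow> u < N \<and> v < N"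
  by (simp add: sqc_adj)

lemma cong_small_zero:
  fixes d :: int
  assumes "[x = x + d] (mod N)" "\<bar>d\<bar> < N"
  shows "d = 0"
proof -
  have "[x + d = x] (mod N)" using assms(1) by (rule cong_sym)
  then have "[d = 0] (mod N)" by (simp only: cong_add_lcancel_0)
  then have "N dvd d" by (simp only: cong_0_iff)
  then obtain t where "d = N * t" by auto
  then show ?thesis using assms(2) small_mult_zero[of N t] by simp
qed

lemma sqc_adj_ne:
  assumes "gadj (sqc N) u v" "N \<ge> 3" shows "u \<noteq> v"
proof
  assume "u = v"
  with assms(1) obtain d :: int where "d \<in> {-2,-1,1,2}" "[int u = int u + d] (mod int N)" unfolding sqc_adj by blast
  moreover then have "\<bar>d\<bar> < int N" using assms(2) by (auto simp: sqc_adj)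
  ultimately have "d = 0" using cong_small_zero[of "int u" d "int N"] by blast
  then show False using \<open>d \<in> _\<close> by simp
qed

lemma sqc_sym: "gadj (sqc N) u v \<Longrightarrow> gadj (sqc N) v u"
proof -
  assume a: "gadj (sqc N) u v"
  then obtain d :: int where d: "d \<in> {-2,-1,1,2}" "[int v = int u + d] (mod int N)" unfolding sqc_adj by blast
  have "[int u = int v + (- d)] (mod int N)"
  proof -
    have "[int v + (-d) = int u + d + (-d)] (mod int N)" using d(2) by (rule cong_add) simp
    then have "[int v + (-d) = int u] (mod int N)" by simp
    then show ?thesis by (rule cong_sym)
  qed
  moreover have "- d \<in> {-2,-1,1,2}" using d(1) by (auto simp: sqc_adj)
  ultimately show ?thesis using a unfolding sqc_adj by blast
qed

lemma sqc_path: "v < N \<Longrightarrow> (gadj (sqc N))\<^sup>*\<^sup>* 0 v"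
proof (induction v)
  case 0 then show ?case by simp
next
  case (Suc v)
  have "[int (Suc v) = int v + 1] (mod int N)" by (simp add: cong_def add.commute)
  moreover have "(1::int) \<in> {-2,-1,1,2}" by simp
  moreover have "v < N" "Suc v < N" using Suc.prems by auto
  ultimately have "gadj (sqc N) v (Suc v)" unfolding sqc_adj by blast
  moreover have "(gadj (sqc N))\<^sup>*\<^sup>* 0 v" using Suc.IH \<open>v < N\<close> by blast
  ultimately show ?case by (simp add: rtranclp.rtrancl_into_rtrancl)
qed

lemma rtranclp_sym_conv:
  assumes "\<And>x y. R x y \<Longrightarrow> R y x" "R\<^sup>*\<^sup>* a b" shows "R\<^sup>*\<^sup>* b a"
  using assms(2) by induction (auto intro: converse_rtranclp_into_rtranclp assms(1))

lemma wf_sqc: "N \<ge> 3 \<Longrightarrow> wf_graph (sqc N)"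
  unfolding wf_graph_def
proof (intro conjI allI impI ballI)
  fix u v assume "N \<ge> 3" "u \<in> gverts (sqc N)" "v \<in> gverts (sqc N)"
  then have "(gadj (sqc N))\<^sup>*\<^sup>* 0 u" "(gadj (sqc N))\<^sup>*\<^sup>* 0 v" using sqc_path by auto
  then have "(gadj (sqc N))\<^sup>*\<^sup>* u 0" "(gadj (sqc N))\<^sup>*\<^sup>* 0 v"
    using rtranclp_sym_conv[of "gadj (sqc N)", OF sqc_sym] by blast+
  then show "(gadj (sqc N))\<^sup>*\<^sup>* u v" by (rule rtranclp_trans)
next
  show "finite (gverts (sqc N))" by simp
  show "gverts (sqc N) \<noteq> {}" if "N \<ge> 3"
  proof -
    have "0 \<in> gverts (sqc N)" using that by simp
    then show ?thesis by blast
  qed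
next
  fix u v assume "gadj (sqc N) u v"
  then show "u \<in> gverts (sqc N)" "v \<in> gverts (sqc N)"
    by (auto simp: sqc_adj)
next
  fix u v assume "gadj (sqc N) u v"
  then show "gadj (sqc N) v u" by (rule sqc_sym)
next
  fix u assume N3: "N \<ge> 3"
  show "\<not> gadj (sqc N) u u"
  proof
    assume "gadj (sqc N) u u"
    from sqc_adj_ne[OF this N3] show False by simp
  qed
qed


lemma int_mod_cong: "[int (a mod n) = int a] (mod int n)"
  by (simp add: cong_def zmod_int)

lemma sqc3_col:
  assumes "n \<ge> 1" shows "sqc (3*n) \<in> three_colorable"
proof -
  have col: "u mod 3 \<noteq> v mod 3" if a: "gadj (sqc (3*n)) u v" for u v
  proof -
    obtain d :: int where d: "d \<in> {-2,-1,1,2}" "[int v = int u + d] (mod int (3*n))"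
      using a unfolding sqc_adj by blast
    have c3: "[int v = int u + d] (mod 3)"
      using d(2) by (rule cong_dvd_modulus) simp
    show "u mod 3 \<noteq> v mod 3"
    proof
      assume "u mod 3 = v mod 3"
      then have h: "[int u = int v] (mod 3)"
        using cong_int_iff[of u v 3] by (simp add: cong_def)
      have "[int u = int u + d] (mod 3)" using cong_trans[OF h c3] .
      then have "[int u + d = int u] (mod 3)" by (rule cong_sym)
      then have "[d = 0] (mod 3)" by (simp only: cong_add_lcancel_0)
      then show False using d(1) by (auto simp: cong_def)
    qed
  qed
  have "wf_graph (sqc (3*n))" using assms by (intro wf_sqc) simp
  moreover have "\<forall>u\<in>gverts (sqc (3*n)). u mod 3 < (3::nat)" by simp
  moreover have "\<forall>u v. gadj (sqc (3*n)) u v \<longrightarrow> u mod 3 \<noteq> v mod 3" using col by blast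
  ultimately show ?thesis unfolding three_colorable_def mem_Collect_eq
    using exI[of "\<lambda>f. (\<forall>u\<in>gverts (sqc (3*n)). f u < 3) \<and> (\<forall>u v. gadj (sqc (3*n)) u v \<longrightarrow> f u \<noteq> f v)" "\<lambda>u. u mod 3"]
    by blast
qed

lemma sqc_adj_shift:
  assumes "c \<in> {1,2}" "n \<ge> 3"
  shows "gadj (sqc n) (i mod n) ((i + c) mod n)"
proof -
  have "[int ((i + c) mod n) = int (i mod n) + int c] (mod int n)"
  proof -
    have "[int ((i + c) mod n) = int (i + c)] (mod int n)" by (rule int_mod_cong)
    moreover have "[int i + int c = int (i mod n) + int c] (mod int n)"
      by (rule cong_add[OF cong_sym[OF int_mod_cong] cong_refl])
    then have "[int (i + c) = int (i mod n) + int c] (mod int n)" by simp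
    ultimately show ?thesis by (rule cong_trans)
  qed
  moreover have "int c \<in> {-2,-1,1,2::int}" using assms(1) by auto
  moreover have "i mod n < n" "(i + c) mod n < n" using assms(2) by auto
  ultimately show ?thesis unfolding sqc_adj by blast
qed

lemma three_vals: "(a::nat) < 3 \<Longrightarrow> b < 3 \<Longrightarrow> c < 3 \<Longrightarrow> x < 3 \<Longrightarrow> a \<noteq> b \<Longrightarrow> a \<noteq> c \<Longrightarrow> b \<noteq> c
  \<Longrightarrow> x \<noteq> b \<Longrightarrow> x \<noteq> c \<Longrightarrow> x = a"
  by linarith

lemma sqc_not_col:
  assumes "n = 3*k+1" "k \<ge> 1"
  shows "sqc n \<notin> three_colorable"
proof
  assume "sqc n \<in> three_colorable"
  then obtain f :: "nat \<Rightarrow> nat" where f: "\<forall>u\<in>gverts (sqc n). f u < 3"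
    "\<forall>u v. gadj (sqc n) u v \<longrightarrow> f u \<noteq> f v" unfolding three_colorable_def by auto
  define g where "g i = f (i mod n)" for i
  have n3: "n \<ge> 3" using assms by simp
  have g3: "g i < 3" for i using f(1) n3 by (auto simp: g_def)
  have g1: "g i \<noteq> g (i+1)" for i using f(2) sqc_adj_shift[of 1 n i] n3 by (auto simp: g_def)
  have g2: "g i \<noteq> g (i+2)" for i using f(2) sqc_adj_shift[of 2 n i] n3 by (auto simp: g_def)
  have per: "g (i+3) = g i" for i
  proof -
    have e: "i+1+2 = i+3" "i+2+1 = i+3" "i+1+1 = i+2" by simp_all
    have "g (i+3) \<noteq> g (i+1)" using g2[of "i+1"] unfolding e by (rule not_sym)
    moreover have "g (i+3) \<noteq> g (i+2)" using g1[of "i+2"] unfolding e by (rule not_sym)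
    moreover have "g (i+1) \<noteq> g (i+2)" using g1[of "i+1"] unfolding e .
    ultimately show ?thesis using g1[of i] g2[of i] g3[of i] g3[of "i+1"] g3[of "i+2"] g3[of "i+3"]
      by (intro three_vals)
  qed
  have "g (3*j) = g 0" for j
  proof (induction j)
    case (Suc j)
    have "3 * Suc j = 3*j + 3" by simp
    then show ?case using per[of "3*j"] Suc.IH by (simp add: add.commute)
  qed simp
  then have "g (3*k) = g 0" by simp
  moreover have "g (3*k+1) = g 0" using assms by (simp add: g_def)
  ultimately show False using g1[of "3*k"] by simp
qed

lemma mod_sep:
  assumes "a < 3*n" "b < 3*n" "a \<noteq> b" "[int b = int a + d] (mod int (3*n))" "\<bar>d\<bar> < int n"
  shows "a mod n \<noteq> b mod n"
proof
  assume "a mod n = b mod n"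
  then have "[int a = int b] (mod int n)" by (metis cong_int_iff cong_def)
  then obtain t where t: "int b = int a + int n * t" by (auto simp: cong_iff_lin)
  from assms(4) obtain s where s: "int a + d = int b + int (3*n) * s"
    by (auto simp: cong_iff_lin cong_sym_eq)
  have "d = int n * (t + 3 * s)" using t s by (simp add: algebra_simps)
  then have "t + 3 * s = 0" using assms(5) small_mult_zero by metis
  then have "d = 0" using \<open>d = _\<close> by simp
  then have "int b = int a + int (3*n) * (- s)" using s by (simp add: algebra_simps)
  moreover have "\<bar>int b - int a\<bar> < int (3*n)" using assms(1,2) by simp
  ultimately have "\<bar>int (3*n) * (- s)\<bar> < int (3*n)" by simp
  then have "s = 0" using small_mult_zero by fastforce
  then show False using t \<open>t + 3 * s = 0\<close> assms(3) by simp
qed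

lemma walk_off:
  "(gadj (sqc N) ^^ k) u v \<Longrightarrow> \<exists>d::int. \<bar>d\<bar> \<le> 2 * int k \<and> [int v = int u + d] (mod int N)"
proof (induction k arbitrary: v)
  case 0 then show ?case by (auto intro!: exI[of _ 0])
next
  case (Suc k)
  from Suc.prems obtain y where y: "(gadj (sqc N) ^^ k) u y" "gadj (sqc N) y v"
    by (rule relpowp_Suc_E)
  from Suc.IH[OF y(1)] obtain d1 where d1: "\<bar>d1\<bar> \<le> 2 * int k" "[int y = int u + d1] (mod int N)"
    by blast
  from y(2) obtain d2 :: int where d2: "d2 \<in> {-2,-1,1,2}" "[int v = int y + d2] (mod int N)"
    unfolding sqc_adj by blast
  have "[int y + d2 = int u + d1 + d2] (mod int N)" using d1(2) by (rule cong_add) simp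
  then have "[int v = int u + (d1 + d2)] (mod int N)" using d2(2)
    by (metis add.assoc cong_trans)
  moreover have "\<bar>d1 + d2\<bar> \<le> 2 * int (Suc k)" using d1(1) d2(1) by auto
  ultimately show ?case by blast
qed

lemma nb_inj:
  assumes "n \<ge> 5" "gadj (sqc (3*n)) v a" "gadj (sqc (3*n)) v b" "a \<noteq> b"
  shows "a mod n \<noteq> b mod n"
proof -
  obtain d1 :: int where d1: "d1 \<in> {-2,-1,1,2}" "[int a = int v + d1] (mod int (3*n))"
    using assms(2) unfolding sqc_adj by blast
  obtain d2 :: int where d2: "d2 \<in> {-2,-1,1,2}" "[int b = int v + d2] (mod int (3*n))"
    using assms(3) unfolding sqc_adj by blast
  have "[int a + (d2 - d1) = int v + d1 + (d2 - d1)] (mod int (3*n))" using d1(2) by (rule cong_add) simp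
  then have "[int a + (d2 - d1) = int v + d2] (mod int (3*n))" by simp
  then have "[int b = int a + (d2 - d1)] (mod int (3*n))" using d2(2)
    by (metis cong_sym cong_trans)
  moreover have "\<bar>d2 - d1\<bar> < int n" using d1(1) d2(1) assms(1) by auto
  moreover have "a < 3*n" "b < 3*n" using adj_lt[OF assms(2)] adj_lt[OF assms(3)] by auto
  ultimately show ?thesis using mod_sep[of a n b "d2 - d1"] assms(4) by blast
qed

lemma cover_adj:
  assumes "n \<ge> 1" "gadj (sqc (3*n)) a b"
  shows "gadj (sqc n) (a mod n) (b mod n)"
proof -
  obtain d :: int where d: "d \<in> {-2,-1,1,2}" "[int b = int a + d] (mod int (3*n))"
    using assms(2) unfolding sqc_adj by blast
  have "[int b = int a + d] (mod int n)" using d(2) by (rule cong_dvd_modulus) simp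
  moreover have "[int (b mod n) = int b] (mod int n)" by (rule int_mod_cong)
  moreover have "[int a + d = int (a mod n) + d] (mod int n)"
    using int_mod_cong[of a n] by (intro cong_add) (auto simp: cong_sym_eq)
  ultimately have "[int (b mod n) = int (a mod n) + d] (mod int n)" by (metis cong_trans)
  moreover have "a mod n < n" "b mod n < n" using assms(1) by auto
  ultimately show ?thesis using d(1) unfolding sqc_adj by blast
qed

lemma cover_lift:
  assumes "n \<ge> 1" "a < 3*n" "gadj (sqc n) (a mod n) w"
  shows "\<exists>b. gadj (sqc (3*n)) a b \<and> b mod n = w"
proof -
  obtain d :: int where d: "d \<in> {-2,-1,1,2}" "[int w = int (a mod n) + d] (mod int n)" "w < n"
    using assms(3) unfolding sqc_adj by blast
  define b where "b = nat ((int a + d) mod int (3*n))"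
  have ib: "int b = (int a + d) mod int (3*n)" using assms(1) by (simp add: b_def)
  have "(int a + d) mod int (3*n) < int (3*n)" using assms(1) by (intro pos_mod_bound) simp
  then have bl: "b < 3*n" using ib by linarith
  have cb: "[int b = int a + d] (mod int (3*n))" using ib by (simp add: cong_def)
  then have "gadj (sqc (3*n)) a b" using d(1) bl assms(2) unfolding sqc_adj by blast
  moreover have "b mod n = w"
  proof -
    have "[int b = int a + d] (mod int n)" using cb by (rule cong_dvd_modulus) simp
    moreover have "[int a + d = int (a mod n) + d] (mod int n)"
      using int_mod_cong[of a n] by (intro cong_add) (auto simp: cong_sym_eq)
    ultimately have "[int (b mod n) = int w] (mod int n)" using d(2) int_mod_cong[of b n]
      by (metis cong_sym cong_trans)
    then have "[b mod n = w] (mod n)" by (simp add: cong_int_iff)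
    moreover have "b mod n < n" using assms(1) by simp
    ultimately show ?thesis using d(3) by (rule cong_less_modulus_unique_nat)
  qed
  ultimately show ?thesis by blast
qed

definition idG :: "nat \<Rightarrow> bool list" where "idG u = replicate u True"
definition idH :: "nat \<Rightarrow> nat \<Rightarrow> bool list" where "idH n j = replicate (j mod n) True"

lemma nbrsH_spec:
  assumes "n \<ge> 5"
  shows "distinct (nbrs (sqc (3*n)) (idH n) j) \<and>
    set (nbrs (sqc (3*n)) (idH n) j) = {v \<in> gverts (sqc (3*n)). gadj (sqc (3*n)) j v} \<and>
    sorted_wrt (\<lambda>a b. id_less (idH n a) (idH n b)) (nbrs (sqc (3*n)) (idH n) j)"
proof -
  let ?A = "{v \<in> gverts (sqc (3*n)). gadj (sqc (3*n)) j v}"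
  have fin: "finite ?A" by simp
  have inj: "inj_on (idH n) ?A"
  proof (rule inj_onI)
    fix a b assume ab: "a \<in> ?A" "b \<in> ?A" "idH n a = idH n b"
    then have "a mod n = b mod n" by (metis idH_def length_replicate)
    then show "a = b" using nb_inj[OF assms, of j a b] ab by blast
  qed
  obtain xs where xs: "distinct xs" "set xs = ?A" "sorted_wrt (\<lambda>a b. id_less (idH n a) (idH n b)) xs"
    using nbrs_exists[OF fin inj] by blast
  then have "nbrs (sqc (3*n)) (idH n) j = xs" by (rule nbrs_eq)
  then show ?thesis using xs by simp
qed

lemma nbrs_cover:
  assumes "n \<ge> 5" "j < 3*n"
  shows "nbrs (sqc n) idG (j mod n) = map (\<lambda>x. x mod n) (nbrs (sqc (3*n)) (idH n) j)"
proof (rule nbrs_eq)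
  let ?xs = "nbrs (sqc (3*n)) (idH n) j"
  have sp: "distinct ?xs" "set ?xs = {v \<in> gverts (sqc (3*n)). gadj (sqc (3*n)) j v}"
    "sorted_wrt (\<lambda>a b. id_less (idH n a) (idH n b)) ?xs"
    using nbrsH_spec[OF assms(1)] by auto
  have "inj_on (\<lambda>x. x mod n) (set ?xs)"
    using nb_inj[OF assms(1), of j] sp(2) by (auto intro!: inj_onI)
  then show "distinct (map (\<lambda>x. x mod n) ?xs)" using sp(1) by (simp add: distinct_map)
  show "set (map (\<lambda>x. x mod n) ?xs) = {v \<in> gverts (sqc n). gadj (sqc n) (j mod n) v}"
  proof
    show "set (map (\<lambda>x. x mod n) ?xs) \<subseteq> {v \<in> gverts (sqc n). gadj (sqc n) (j mod n) v}"
    proof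
      fix w assume "w \<in> set (map (\<lambda>x. x mod n) ?xs)"
      then obtain b where b: "b \<in> set ?xs" "w = b mod n" by auto
      then have "gadj (sqc (3*n)) j b" using sp(2) by simp
      then have "gadj (sqc n) (j mod n) w" using cover_adj[of n j b] assms(1) b(2) by simp
      moreover have "w < n" using b(2) assms(1) by simp
      ultimately show "w \<in> {v \<in> gverts (sqc n). gadj (sqc n) (j mod n) v}" by simp
    qed
    show "{v \<in> gverts (sqc n). gadj (sqc n) (j mod n) v} \<subseteq> set (map (\<lambda>x. x mod n) ?xs)"
    proof
      fix w assume "w \<in> {v \<in> gverts (sqc n). gadj (sqc n) (j mod n) v}"
      then have "gadj (sqc n) (j mod n) w" by simp
      then obtain b where "gadj (sqc (3*n)) j b" "b mod n = w"
        using cover_lift[of n j w] assms by auto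
      moreover then have "b \<in> set ?xs" using sp(2) adj_lt[of "3*n" j b] by simp
      ultimately show "w \<in> set (map (\<lambda>x. x mod n) ?xs)" by auto
    qed
  qed
  show "sorted_wrt (\<lambda>a b. id_less (idG a) (idG b)) (map (\<lambda>x. x mod n) ?xs)"
    using sp(3) by (simp add: sorted_wrt_map idG_def idH_def)
qed

lemma msg_cover:
  assumes "n \<ge> 5" "gadj (sqc (3*n)) j v" "\<forall>x<3*n. SH x = SG (x mod n)"
  shows "msg_from (sqc (3*n)) (idH n) SH v j = msg_from (sqc n) idG SG (v mod n) (j mod n)"
proof -
  let ?ns = "nbrs (sqc (3*n)) (idH n) v"
  have v: "v < 3*n" and j: "j < 3*n" using adj_lt[OF assms(2)] by auto
  have nb: "nbrs (sqc n) idG (v mod n) = map (\<lambda>x. x mod n) ?ns"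
    using nbrs_cover[OF assms(1) v] .
  have sp: "set ?ns = {x \<in> gverts (sqc (3*n)). gadj (sqc (3*n)) v x}"
    using nbrsH_spec[OF assms(1)] by auto
  have vj: "gadj (sqc (3*n)) v j" using assms(2) by (rule sqc_sym)
  have eqv: "(?ns ! i mod n = j mod n) = (?ns ! i = j)" if "i < length ?ns" for i
  proof -
    have "?ns ! i \<in> set ?ns" using that by simp
    then have "gadj (sqc (3*n)) v (?ns ! i)" using sp by simp
    then show ?thesis using nb_inj[OF assms(1) _ vj] by blast
  qed
  have L: "[i. i \<leftarrow> [0..<length ?ns], map (\<lambda>x. x mod n) ?ns ! i = j mod n]
         = [i. i \<leftarrow> [0..<length ?ns], ?ns ! i = j]"
    using eqv by (intro arg_cong[where f=concat] map_cong) auto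
  have Sv: "SH v = SG (v mod n)" using assms(3) v by blast
  show ?thesis
    unfolding msg_from_def Let_def nb length_map L Sv ..
qed

lemma recv_cover:
  assumes "n \<ge> 5" "j < 3*n" "\<forall>x<3*n. SH x = SG (x mod n)"
  shows "recv_tape (sqc (3*n)) (idH n) SH j = recv_tape (sqc n) idG SG (j mod n)"
proof -
  have sp: "set (nbrs (sqc (3*n)) (idH n) j) = {x \<in> gverts (sqc (3*n)). gadj (sqc (3*n)) j x}"
    using nbrsH_spec[OF assms(1)] by auto
  show ?thesis
    unfolding recv_tape_def nbrs_cover[OF assms(1,2)] map_map
    using sp msg_cover[OF assms(1) _ assms(3), of j]
    by (intro arg_cong[where f=concat] map_cong) auto
qed

lemma node_cover:
  assumes "n \<ge> 5" "j < 3*n" "\<forall>x<3*n. SH x = SG (x mod n)"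
  shows "node_round M (sqc (3*n)) (idH n) SH j = node_round M (sqc n) idG SG (j mod n)"
proof -
  have Sj: "SH j = SG (j mod n)" using assms(2,3) by blast
  show ?thesis unfolding node_round_def recv_cover[OF assms] Sj ..
qed

lemma exec_cover:
  assumes "n \<ge> 5"
  shows "exec M (sqc (3*n)) (idH n) r = Some SH \<Longrightarrow>
    \<exists>SG. exec M (sqc n) idG r = Some SG \<and> (\<forall>x<3*n. SH x = SG (x mod n))"
proof (induction r arbitrary: SH)
  case 0
  then show ?case by (auto simp: init_state_def idH_def idG_def)
next
  case (Suc r)
  obtain S where S: "exec M (sqc (3*n)) (idH n) r = Some S"
    using Suc.prems by (cases "exec M (sqc (3*n)) (idH n) r") auto
  have E: "(if \<forall>u\<in>gverts (sqc (3*n)). node_round M (sqc (3*n)) (idH n) S u \<noteq> None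
     then Some (\<lambda>u. snd (the (node_round M (sqc (3*n)) (idH n) S u))) else None) = Some SH"
    using Suc.prems S by simp
  have c: "\<forall>u\<in>gverts (sqc (3*n)). node_round M (sqc (3*n)) (idH n) S u \<noteq> None"
    using E by (metis option.distinct(1))
  have SH: "SH = (\<lambda>u. snd (the (node_round M (sqc (3*n)) (idH n) S u)))"
    using E c by simp
  obtain SG where SG: "exec M (sqc n) idG r = Some SG" "\<forall>x<3*n. S x = SG (x mod n)"
    using Suc.IH[OF S] by blast
  have nc: "node_round M (sqc (3*n)) (idH n) S x = node_round M (sqc n) idG SG (x mod n)"
    if "x < 3*n" for x using node_cover[OF assms that SG(2)] .
  have c2: "\<forall>u\<in>gverts (sqc n). node_round M (sqc n) idG SG u \<noteq> None"
  proof
    fix u assume "u \<in> gverts (sqc n)"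
    then have u: "u < n" by simp
    then have "node_round M (sqc n) idG SG u = node_round M (sqc (3*n)) (idH n) S u"
      using nc[of u] by simp
    then show "node_round M (sqc n) idG SG u \<noteq> None" using c u by simp
  qed
  have E2: "exec M (sqc n) idG (Suc r) = Some (\<lambda>u. snd (the (node_round M (sqc n) idG SG u)))"
    using SG(1) c2 by simp
  have "\<forall>x<3*n. SH x = snd (the (node_round M (sqc n) idG SG (x mod n)))"
    using nc unfolding SH by simp
  then show ?case using E2 by auto
qed

theorem corollary9p2:
  shows "three_colorable \<notin> LP"
proof
  assume "three_colorable \<in> LP"
  then obtain M r_id where r: "r_id \<ge> 1" and
    acc: "\<And>G idf. wf_graph G \<Longrightarrow> locally_unique r_id G idf \<Longrightarrow> (accepts M G idf \<longleftrightarrow> G \<in> three_colorable)"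
    unfolding LP_def by blast
  define k where "k = 2 * r_id + 2"
  define n where "n = 3 * k + 1"
  have n5: "n \<ge> 5" and nr: "4 * r_id < n" and k1: "k \<ge> 1" by (auto simp: n_def k_def)
  have wfG: "wf_graph (sqc n)" using n5 by (intro wf_sqc) simp
  have wfH: "wf_graph (sqc (3*n))" using n5 by (intro wf_sqc) simp
  have luG: "locally_unique r_id (sqc n) idG"
    unfolding locally_unique_def by (auto simp: idG_def)
  have luH: "locally_unique r_id (sqc (3*n)) (idH n)"
    unfolding locally_unique_def
  proof (intro ballI impI)
    fix u v assume uv: "u \<in> gverts (sqc (3*n))" "v \<in> gverts (sqc (3*n))"
      "u \<noteq> v \<and> (\<exists>k\<le>2*r_id. (gadj (sqc (3*n)) ^^ k) u v)"
    then obtain k' where k': "k' \<le> 2*r_id" "(gadj (sqc (3*n)) ^^ k') u v" by blast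
    obtain d where d: "\<bar>d\<bar> \<le> 2 * int k'" "[int v = int u + d] (mod int (3*n))"
      using walk_off[OF k'(2)] by blast
    have "\<bar>d\<bar> < int n" using d(1) k'(1) nr by linarith
    then have "u mod n \<noteq> v mod n" using mod_sep[of u n v d] uv d(2) by simp
    then show "idH n u \<noteq> idH n v" by (metis idH_def length_replicate)
  qed
  have "sqc (3*n) \<in> three_colorable" using n5 by (intro sqc3_col) simp
  then have "accepts M (sqc (3*n)) (idH n)" using acc[OF wfH luH] by simp
  then obtain r SH where SH: "exec M (sqc (3*n)) (idH n) r = Some SH"
    "\<forall>u\<in>gverts (sqc (3*n)). ns_stop (SH u)" "\<forall>u\<in>gverts (sqc (3*n)). bits_of (ns_int (SH u)) = [True]"
    unfolding accepts_def by blast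
  obtain SG where SG: "exec M (sqc n) idG r = Some SG" "\<forall>x<3*n. SH x = SG (x mod n)"
    using exec_cover[OF n5 SH(1)] by blast
  have "accepts M (sqc n) idG"
    unfolding accepts_def
  proof (intro exI conjI ballI)
    show "exec M (sqc n) idG r = Some SG" by (rule SG(1))
    fix u assume "u \<in> gverts (sqc n)"
    then have u: "u < n" "u < 3*n" by auto
    then have "SG u = SH u" using SG(2) by simp
    then show "ns_stop (SG u)" "bits_of (ns_int (SG u)) = [True]" using SH(2,3) u by auto
  qed
  then have "sqc n \<in> three_colorable" using acc[OF wfG luG] by simp
  moreover have "sqc n \<notin> three_colorable" using k1 by (intro sqc_not_col[of n k]) (simp add: n_def)
  ultimately show False by simp
qed

end
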